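(* Let $b\ge 1$ and let $r=(r_1,r_2,\ldots,r_\ell)$ be an ordered partition of $b$. The number of ways that $r$ can have an ordered partition of $b$ embedded inside it (counting nontrivial embeddings of every ordered partition $q$ of $b$ into $r$, together with the one trivial embedding of $r$ into itself) is \[ \prod_{i=1}^{\ell}(r_i+1). \] Equivalently, this is the number of cards for $b$ balls whose right partition is $r$.
   Context: For an integer $b\ge 0$, an ordered partition of $b$ is a finite sequence $(q_1,\ldots,q_k)$ of positive integers summing to $b$ (for $b=0$ the only one is the empty sequence). An ordered partition $(q_1,\ldots,q_k)$ with $k\ge1$ is nontrivially embedded into an ordered partition $(r_1,\ldots,r_\ell)$ by a choice of indices $1\le i_2<i_3<\cdots<i_k\le \ell$ with $q_j\le r_{i_j}$ for $2\le j\le k$; different index tuples count as different embeddings. The trivial embedding of $q$ into $r$ exists only when $q=r$. A card for $b$ balls is either (i) a trivial card, given by an ordered partition $q$ of $b$, whose left and right partitions are both $q$; or (ii) a throw card, given by ordered partitions $q=(q_1,\ldots,q_k)$ ($k\ge1$) and $r=(r_1,\ldots,r_\ell)$ of $b$ together with a nontrivial embedding $(i_2,\ldots,i_k)$ of $q$ into $r$; its left partition is $q$ and its right partition is $r$. Different index tuples give different cards, and a throw card is distinct from the trivial card even when $q=r$. *)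

theory Defs
  imports Main
begin

definition ordered_partition :: "nat \<Rightarrow> nat list \<Rightarrow> bool" where
  "ordered_partition b q \<longleftrightarrow> (\<forall>x\<in>set q. 0 < x) \<and> sum_list q = b"

(* Nontrivial embeddings of q = (q_1,...,q_k), k >= 1, into r = (r_1,...,r_l):
   index tuples (i_2,...,i_k) with 1 <= i_2 < ... < i_k <= l and q_j <= r_{i_j}.
   Lists are 0-indexed here: the tuple is a list "is" of length k-1 with
   is!(j-2) = i_j - 1, so the condition reads q!(j+1) <= r!(is!j) for j < k-1. *)
definition nontriv_embeddings :: "nat list \<Rightarrow> nat list \<Rightarrow> nat list set" where
  "nontriv_embeddings q r =
     (if q = [] then {} else
      {is. length is = length q - 1 \<and> sorted_wrt (<) is \<and> (\<forall>i\<in>set is. i < length r)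
           \<and> (\<forall>j < length is. q ! (j + 1) \<le> r ! (is ! j))})"

datatype card = Trivial "nat list" | Throw "nat list" "nat list" "nat list"

(* Cards for b balls. Throw q r is: left partition q, right partition r, embedding is. *)
definition cards :: "nat \<Rightarrow> card set" where
  "cards b = {Trivial q | q. ordered_partition b q}
     \<union> {Throw q r is | q r is. ordered_partition b q \<and> q \<noteq> [] \<and> ordered_partition b r
                          \<and> is \<in> nontriv_embeddings q r}"

fun right_partition :: "card \<Rightarrow> nat list" where
  "right_partition (Trivial q) = q"
| "right_partition (Throw q r is) = r"

end

theory Submission
  imports Defs
begin

definition Cset :: "nat list \<Rightarrow> nat list set" where
  "Cset r = {c. length c = length r \<and> (\<forall>i<length r. c!i \<le> r!i)}"

lemma Cset_Cons: "Cset (a#r) = (\<lambda>(x,c). x#c) ` ({0..a} \<times> Cset r)"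
proof
  show "Cset (a#r) \<subseteq> (\<lambda>(x,c). x#c) ` ({0..a} \<times> Cset r)"
  proof
    fix c assume "c \<in> Cset (a#r)"
    then obtain x d where c: "c = x#d" and l: "length d = length r"
      and le: "\<forall>i<Suc (length r). c!i \<le> (a#r)!i"
      unfolding Cset_def by (cases c) auto
    have "x \<le> a" using le c by (metis nth_Cons_0 zero_less_Suc)
    moreover have "\<forall>i<length r. d!i \<le> r!i" using le c by (metis Suc_mono nth_Cons_Suc)
    ultimately show "c \<in> (\<lambda>(x,c). x#c) ` ({0..a} \<times> Cset r)"
      using c l unfolding Cset_def by force
  qed
next
  show "(\<lambda>(x,c). x#c) ` ({0..a} \<times> Cset r) \<subseteq> Cset (a#r)"
    unfolding Cset_def by (auto simp: nth_Cons split: nat.splits)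
qed

lemma Cset_card: "finite (Cset r) \<and> card (Cset r) = (\<Prod>x\<leftarrow>r. x + 1)"
proof (induction r)
  case Nil
  have "Cset [] = {[]}" unfolding Cset_def by auto
  then show ?case by simp
next
  case (Cons a r)
  have inj: "inj_on (\<lambda>(x,c). x#c) ({0..a} \<times> Cset r)"
    by (auto simp: inj_on_def)
  show ?case using Cons inj unfolding Cset_Cons
    by (simp add: card_image card_cartesian_product)
qed

definition idx :: "nat \<Rightarrow> nat list \<Rightarrow> nat list" where
  "idx n c = filter (\<lambda>i. 0 < c!i) [0..<n]"

definition gmap :: "nat \<Rightarrow> nat \<Rightarrow> nat list \<Rightarrow> nat list \<times> nat list" where
  "gmap b n c = ((b - sum_list c) # map (nth c) (idx n c), idx n c)"

lemma sum_idx: "length c = n \<Longrightarrow> sum_list c = sum_list (map (nth c) (idx n c))"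
proof -
  assume l: "length c = n"
  have "sum_list (map (nth c) (idx n c)) = sum (nth c) (set (idx n c))"
    by (simp add: idx_def sum_list_distinct_conv_sum_set)
  also have "set (idx n c) = {i. i < n \<and> 0 < c!i}" by (auto simp: idx_def)
  also have "sum (nth c) {i. i < n \<and> 0 < c!i} = sum (nth c) {..<n}"
    by (rule sum.mono_neutral_left) auto
  also have "\<dots> = sum_list c" using l by (simp add: sum_list_sum_nth atLeast0LessThan)
  finally show ?thesis by simp
qed

lemma len_le_sum: "\<forall>x\<in>set q. 0 < (x::nat) \<Longrightarrow> length q \<le> sum_list q"
  by (induction q) auto

lemma finite_parts: "finite {q. ordered_partition b q \<and> q \<noteq> []}"
proof -
  have "{q. ordered_partition b q \<and> q \<noteq> []} \<subseteq> {xs. set xs \<subseteq> {0..b} \<and> length xs \<le> b}"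
  proof
    fix q assume "q \<in> {q. ordered_partition b q \<and> q \<noteq> []}"
    then have p: "\<forall>x\<in>set q. 0 < x" "sum_list q = b" by (auto simp: ordered_partition_def)
    then have "length q \<le> b" using len_le_sum by metis
    moreover have "set q \<subseteq> {0..b}" using p member_le_sum_list by fastforce
    ultimately show "q \<in> {xs. set xs \<subseteq> {0..b} \<and> length xs \<le> b}" by auto
  qed
  then show ?thesis using finite_subset finite_lists_length_le[of "{0..b}" b] by blast
qed

lemma finite_emb: "finite (nontriv_embeddings q r)"
proof -
  have "nontriv_embeddings q r \<subseteq> {xs. set xs \<subseteq> {..<length r} \<and> length xs = length q - 1}"
    unfolding nontriv_embeddings_def by auto
  then show ?thesis using finite_subset finite_lists_length_eq[of "{..<length r}"] by blast
qed

lemma sorted_filter_eq: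
  assumes "sorted_wrt (<) is" "\<forall>i\<in>set is. i < n"
  shows "filter (\<lambda>i. i \<in> set is) [0..<n] = is"
  apply (rule sorted_distinct_set_unique)
  using assms by (auto simp: strict_sorted_iff sorted_wrt_filter)

lemma main_bij:
  assumes b: "ordered_partition b r"
  defines "S \<equiv> Sigma {q. ordered_partition b q \<and> q \<noteq> []} (\<lambda>q. nontriv_embeddings q r)"
  shows "bij_betw (gmap b (length r)) (Cset r - {r}) S"
proof -
  let ?n = "length r"
  have rpos: "\<forall>x\<in>set r. 0 < x" and rs: "sum_list r = b" using b by (auto simp: ordered_partition_def)
  have inj: "inj_on (gmap b ?n) (Cset r - {r})"
  proof (rule inj_onI)
    fix c d assume c: "c \<in> Cset r - {r}" and d: "d \<in> Cset r - {r}" and e: "gmap b ?n c = gmap b ?n d"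
    have ie: "idx ?n c = idx ?n d" and me: "map (nth c) (idx ?n c) = map (nth d) (idx ?n d)"
      using e by (auto simp: gmap_def)
    have lc: "length c = ?n" and ld: "length d = ?n" using c d by (auto simp: Cset_def)
    show "c = d"
    proof (rule nth_equalityI)
      show "length c = length d" using lc ld by simp
      fix i assume i: "i < length c"
      show "c!i = d!i"
      proof (cases "0 < c!i")
        case True
        then have "i \<in> set (idx ?n c)" using i lc by (auto simp: idx_def)
        then show ?thesis using me ie by (simp add: map_eq_conv)
      next
        case False
        then have "i \<notin> set (idx ?n c)" by (auto simp: idx_def)
        then have "i \<notin> set (idx ?n d)" using ie by simp
        then have "\<not> 0 < d!i" using i lc by (auto simp: idx_def)
        then show ?thesis using False by simp
      qed
    qed
  qed
  have img1: "gmap b ?n ` (Cset r - {r}) \<subseteq> S"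
  proof
    fix y assume "y \<in> gmap b ?n ` (Cset r - {r})"
    then obtain c where c: "c \<in> Cset r" "c \<noteq> r" and y: "y = gmap b ?n c" by auto
    have lc: "length c = ?n" and le: "\<forall>i<?n. c!i \<le> r!i" using c by (auto simp: Cset_def)
    have lt: "sum_list c < b"
    proof -
      obtain i where i: "i < ?n" "c!i \<noteq> r!i" using c lc nth_equalityI by metis
      have "sum (nth c) {..<?n} < sum (nth r) {..<?n}"
        apply (rule sum_strict_mono_ex1) using le i by (auto intro!: bexI[of _ i] simp: order_less_le)
      then show ?thesis using lc rs by (simp add: sum_list_sum_nth atLeast0LessThan)
    qed
    let ?is = "idx ?n c"
    let ?q = "(b - sum_list c) # map (nth c) ?is"
    have "ordered_partition b ?q"
      unfolding ordered_partition_def using lt sum_idx[OF lc]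
      by (auto simp: idx_def)
    moreover have "?is \<in> nontriv_embeddings ?q r"
      unfolding nontriv_embeddings_def using le
      by (auto simp: idx_def sorted_wrt_filter)
         (metis (no_types, lifting) mem_Collect_eq nth_mem set_filter set_upt atLeastLessThan_iff)
    ultimately show "y \<in> S" unfolding S_def y gmap_def by auto
  qed
  have img2: "S \<subseteq> gmap b ?n ` (Cset r - {r})"
  proof
    fix p assume "p \<in> S"
    then obtain q "is" where p: "p = (q, is)" and q: "ordered_partition b q" "q \<noteq> []"
      and em: "is \<in> nontriv_embeddings q r" unfolding S_def by auto
    have qpos: "\<forall>x\<in>set q. 0 < x" and qs: "sum_list q = b" using q by (auto simp: ordered_partition_def)
    have li: "length is = length q - 1" and so: "sorted_wrt (<) is" and ib: "\<forall>i\<in>set is. i < ?n"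
      and ile: "\<forall>j<length is. q!(j+1) \<le> r!(is!j)"
      using em q(2) unfolding nontriv_embeddings_def by auto
    have dis: "distinct is" using so by (simp add: strict_sorted_iff)
    define ix where "ix i = (THE j. j < length is \<and> is!j = i)" for i
    have ixj: "ix (is!j) = j" if "j < length is" for j
      unfolding ix_def using that dis by (auto simp: nth_eq_iff_index_eq)
    define c where "c = map (\<lambda>i. if i \<in> set is then q ! Suc (ix i) else 0) [0..<?n]"
    have lc: "length c = ?n" by (simp add: c_def)
    have cis: "c!(is!j) = q!Suc j" if "j < length is" for j
      using that ib ixj by (simp add: c_def)
    have cpos: "0 < c!i \<longleftrightarrow> i \<in> set is" if "i < ?n" for i
    proof
      assume "0 < c!i" then show "i \<in> set is" using that by (auto simp: c_def split: if_splits)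
    next
      assume "i \<in> set is"
      then obtain j where j: "j < length is" "i = is!j" by (auto simp: in_set_conv_nth)
      then have "Suc j < length q" using li by simp
      then show "0 < c!i" using cis j qpos by simp
    qed
    have idxc: "idx ?n c = is"
    proof -
      have "idx ?n c = filter (\<lambda>i. i \<in> set is) [0..<?n]"
        unfolding idx_def by (rule filter_cong) (auto simp: cpos)
      then show ?thesis using sorted_filter_eq[OF so ib] by simp
    qed
    have tq: "map (nth c) is = tl q"
      apply (rule nth_equalityI) using li cis by (auto simp: nth_tl)
    have qq: "q = hd q # tl q" using q(2) by simp
    have sc: "sum_list c = sum_list (tl q)" using sum_idx[OF lc] idxc tq by simp
    have hq: "b - sum_list c = hd q" using qs sc qq by (metis add_diff_cancel_right' sum_list.Cons)
    have gc: "gmap b ?n c = p" unfolding gmap_def p idxc tq hq using qq by simp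
    have cC: "c \<in> Cset r" unfolding Cset_def
    proof (intro CollectI conjI allI impI)
      show "length c = ?n" by (rule lc)
      fix i assume i: "i < ?n"
      show "c!i \<le> r!i"
      proof (cases "i \<in> set is")
        case True
        then obtain j where j: "j < length is" "i = is!j" by (auto simp: in_set_conv_nth)
        then show ?thesis using cis ile by simp
      next
        case False then show ?thesis using i by (simp add: c_def)
      qed
    qed
    have "c \<noteq> r"
    proof
      assume "c = r"
      then have "hd q = 0" using hq rs by simp
      then show False using qpos q(2) by (metis hd_in_set less_irrefl)
    qed
    then show "p \<in> gmap b ?n ` (Cset r - {r})" using gc cC by blast
  qed
  show ?thesis using inj img1 img2 unfolding bij_betw_def by blast
qed

theorem lemma2:
  fixes b :: nat and r :: "nat list"
  assumes "b \<ge> 1" and "ordered_partition b r"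
  shows "1 + (\<Sum>q\<in>{q. ordered_partition b q \<and> q \<noteq> []}. card (nontriv_embeddings q r))
           = (\<Prod>x\<leftarrow>r. x + 1)
       \<and> card {c \<in> cards b. right_partition c = r} = (\<Prod>x\<leftarrow>r. x + 1)"
proof -
  let ?A = "{q. ordered_partition b q \<and> q \<noteq> []}"
  let ?S = "Sigma ?A (\<lambda>q. nontriv_embeddings q r)"
  have cS: "card ?S = (\<Sum>q\<in>?A. card (nontriv_embeddings q r))"
    using finite_parts finite_emb by simp
  have rC: "r \<in> Cset r" by (simp add: Cset_def)
  have "card ?S = card (Cset r - {r})" using main_bij[OF assms(2)] bij_betw_same_card by metis
  also have "\<dots> = card (Cset r) - 1" using rC Cset_card by simp
  finally have e1: "1 + card ?S = (\<Prod>x\<leftarrow>r. x + 1)"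
    using rC Cset_card by (metis One_nat_def Suc_pred card_gt_0_iff empty_iff plus_1_eq_Suc)
  have fS: "finite ?S" using finite_parts finite_emb by simp
  have set: "{c \<in> cards b. right_partition c = r} = insert (Trivial r) ((\<lambda>(q,is). Throw q r is) ` ?S)"
    using assms(2) unfolding cards_def by auto
  have inj: "inj_on (\<lambda>(q,is). Throw q r is) ?S" by (auto simp: inj_on_def)
  have "card {c \<in> cards b. right_partition c = r} = 1 + card ?S"
  proof -
    have "Trivial r \<notin> (\<lambda>(q,is). Throw q r is) ` ?S" by auto
    then show ?thesis unfolding set using fS inj by (simp add: card_image)
  qed
  then show ?thesis using e1 cS by simp
qed

end
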